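(* Let $m\ge2$, $N\in\mathbb{N}$, let $\Omega\subset\mathbb{R}^m$ be a bounded open connected set, and let $\overline\Omega=\{(x_1,\ldots,x_N)\in\Omega^N: x_i\neq x_j \text{ for all } i\neq j\}$. Let $V_1,\ldots,V_d$ be smooth vector fields on $\mathbb{R}^m$ such that $\mathrm{Lie}(V_1,\ldots,V_d)$ interpolates at the tuple $\bar x=(x_1,\ldots,x_N)\in\overline\Omega$. Then \[ \mathrm{Lie}(V_1^{\oplus N},\ldots,V_d^{\oplus N})(\bar x)=(\mathbb{R}^m)^N, \] i.e. the vector fields $V_1^{\oplus N},\ldots,V_d^{\oplus N}$ on $(\mathbb{R}^m)^N$ satisfy the Hörmander condition at $\bar x$.
   Context: For smooth vector fields $U,V$ on $\mathbb{R}^n$, the Lie bracket is $[U,V](x)=DV(x)U(x)-DU(x)V(x)$, with $DU$ the Jacobian matrix. $\mathrm{Lie}(U_1,\ldots,U_d)$ is the smallest linear space of vector fields containing $U_1,\ldots,U_d$ and closed under Lie brackets, and $\mathrm{Lie}(U_1,\ldots,U_d)(x)=\{W(x): W\in\mathrm{Lie}(U_1,\ldots,U_d)\}\subseteq\mathbb{R}^n$. For a vector field $V$ on $\mathbb{R}^m$, $V^{\oplus N}$ is the vector field on $(\mathbb{R}^m)^N$ given by $V^{\oplus N}(x_1,\ldots,x_N)=(V(x_1),\ldots,V(x_N))$. A collection $\mathcal V$ of vector fields on $\mathbb{R}^m$ interpolates at a tuple $(x_1,\ldots,x_N)$ if for every $(v_1,\ldots,v_N)\in(\mathbb{R}^m)^N$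 there exists $\widehat V\in\mathcal V$ with $\widehat V(x_i)=v_i$ for all $i=1,\ldots,N$. *)

theory Defs
  imports "HOL-Analysis.Analysis"
begin

text \<open>Smooth (C-infinity) maps: differentiable everywhere, and every directional
derivative map x \<mapsto> Df(x) v is again smooth (coinductively, so derivatives of all
orders exist everywhere).\<close>
coinductive smooth_map :: "('a::real_normed_vector \<Rightarrow> 'b::real_normed_vector) \<Rightarrow> bool" where
  "(\<And>x. f differentiable (at x)) \<Longrightarrow>
   (\<And>v. smooth_map (\<lambda>x. frechet_derivative f (at x) v)) \<Longrightarrow> smooth_map f"

definition lie_bracket ::
  "('a::real_normed_vector \<Rightarrow> 'a) \<Rightarrow> ('a \<Rightarrow> 'a) \<Rightarrow> ('a \<Rightarrow> 'a)" where
  "lie_bracket U V = (\<lambda>x. frechet_derivative V (at x) (U x) - frechet_derivative U (at x) (V x))"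

inductive_set lie_gen :: "('a::real_normed_vector \<Rightarrow> 'a) set \<Rightarrow> ('a \<Rightarrow> 'a) set"
  for S where
  base: "U \<in> S \<Longrightarrow> U \<in> lie_gen S"
| zero: "(\<lambda>x. 0) \<in> lie_gen S"
| add: "U \<in> lie_gen S \<Longrightarrow> W \<in> lie_gen S \<Longrightarrow> (\<lambda>x. U x + W x) \<in> lie_gen S"
| scale: "U \<in> lie_gen S \<Longrightarrow> (\<lambda>x. c *\<^sub>R U x) \<in> lie_gen S"
| bracket: "U \<in> lie_gen S \<Longrightarrow> W \<in> lie_gen S \<Longrightarrow> lie_bracket U W \<in> lie_gen S"

definition lie_at :: "('a::real_normed_vector \<Rightarrow> 'a) set \<Rightarrow> 'a \<Rightarrow> 'a set" where
  "lie_at S x = {W x | W. W \<in> lie_gen S}"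

text \<open>V^{\<oplus>N} on (R^m)^N, with N = CARD('n).\<close>
definition direct_sum_vf :: "('a \<Rightarrow> 'a) \<Rightarrow> ('a ^ 'n \<Rightarrow> 'a ^ 'n)" where
  "direct_sum_vf V = (\<lambda>X. \<chi> i. V (X $ i))"

definition interpolates :: "('a \<Rightarrow> 'b) set \<Rightarrow> ('n \<Rightarrow> 'a) \<Rightarrow> bool" where
  "interpolates \<V> x \<longleftrightarrow> (\<forall>v :: 'n \<Rightarrow> 'b. \<exists>W\<in>\<V>. \<forall>i. W (x i) = v i)"

end

theory Submission
  imports Defs
begin

lemma smooth_differentiable: "smooth_map f \<Longrightarrow> f differentiable (at x)"
  by (erule smooth_map.cases) auto

lemma smooth_deriv: "smooth_map f \<Longrightarrow> smooth_map (\<lambda>x. frechet_derivative f (at x) v)"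
  by (erule smooth_map.cases) auto

lemma smooth_hasderiv: "smooth_map f \<Longrightarrow> (f has_derivative frechet_derivative f (at x)) (at x)"
  using smooth_differentiable frechet_derivative_works by blast

lemma smooth_coind:
  assumes "X f"
    and "\<And>f. X f \<Longrightarrow> (\<forall>x. f differentiable (at x)) \<and>
      (\<forall>v. X (\<lambda>x. frechet_derivative f (at x) v) \<or> smooth_map (\<lambda>x. frechet_derivative f (at x) v))"
  shows "smooth_map f"
  using assms(1) by (rule smooth_map.coinduct[of X]) (use assms(2) in blast)

lemma fd_fun: "(f has_derivative D) (at x) \<Longrightarrow> frechet_derivative f (at x) = D"
  by (rule sym, rule frechet_derivative_at)

lemma smooth_const: "smooth_map (\<lambda>x::'a::real_normed_vector. c::'b::real_normed_vector)"
proof (rule smooth_coind[of "\<lambda>f::'a\<Rightarrow>'b. \<exists>c. f = (\<lambda>x. c)"])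
  show "\<exists>c'. (\<lambda>x::'a. c) = (\<lambda>x. c')" by blast
next
  fix f :: "'a \<Rightarrow> 'b"
  assume "\<exists>c. f = (\<lambda>x. c)"
  then obtain c where f: "f = (\<lambda>x. c)" by blast
  have "\<And>x. frechet_derivative f (at x) = (\<lambda>_. 0)"
    unfolding f by (rule fd_fun, rule has_derivative_const)
  then show "(\<forall>x. f differentiable (at x)) \<and> (\<forall>v. (\<exists>c. (\<lambda>x. frechet_derivative f (at x) v) = (\<lambda>x. c)) \<or> smooth_map (\<lambda>x. frechet_derivative f (at x) v))"
    unfolding f by auto
qed

inductive SP :: "('a::real_normed_vector \<Rightarrow> 'b::real_normed_vector) \<Rightarrow> bool" where
  SP0: "SP (\<lambda>x. 0)"
| SPm: "smooth_map a \<Longrightarrow> smooth_map f \<Longrightarrow> SP (\<lambda>x. a x *\<^sub>R f x)"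
| SPa: "SP g \<Longrightarrow> SP h \<Longrightarrow> SP (\<lambda>x. g x + h x)"

lemma SP_step:
  assumes "SP h"
  shows "(\<forall>x. h differentiable (at x)) \<and> (\<forall>v. SP (\<lambda>x. frechet_derivative h (at x) v))"
  using assms
proof induction
  case SP0
  have "\<And>x. frechet_derivative (\<lambda>x::'a. 0::'b) (at x) = (\<lambda>_. 0)"
    by (rule fd_fun, rule has_derivative_const)
  then show ?case by (auto intro: SP.SP0)
next
  case (SPm a f)
  have d: "((\<lambda>x. a x *\<^sub>R f x) has_derivative
     (\<lambda>v. a x *\<^sub>R frechet_derivative f (at x) v + frechet_derivative a (at x) v *\<^sub>R f x)) (at x)" for x
    using has_derivative_scaleR[OF smooth_hasderiv[OF SPm(1)] smooth_hasderiv[OF SPm(2)]] .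
  have "SP (\<lambda>x. frechet_derivative (\<lambda>x. a x *\<^sub>R f x) (at x) v)" for v
  proof -
    have "(\<lambda>x. frechet_derivative (\<lambda>x. a x *\<^sub>R f x) (at x) v) =
      (\<lambda>x. a x *\<^sub>R frechet_derivative f (at x) v + frechet_derivative a (at x) v *\<^sub>R f x)"
      by (rule ext) (simp only: fd_fun[OF d])
    moreover have "SP (\<lambda>x. a x *\<^sub>R frechet_derivative f (at x) v + frechet_derivative a (at x) v *\<^sub>R f x)"
      by (intro SP.SPa SP.SPm SPm smooth_deriv)
    ultimately show ?thesis by simp
  qed
  then show ?case using d differentiable_def by blast
next
  case (SPa g h)
  have d: "((\<lambda>x. g x + h x) has_derivative
     (\<lambda>v. frechet_derivative g (at x) v + frechet_derivative h (at x) v)) (at x)" for x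
    using SPa.IH frechet_derivative_works has_derivative_add by blast
  have "SP (\<lambda>x. frechet_derivative (\<lambda>x. g x + h x) (at x) v)" for v
  proof -
    have "(\<lambda>x. frechet_derivative (\<lambda>x. g x + h x) (at x) v) =
      (\<lambda>x. frechet_derivative g (at x) v + frechet_derivative h (at x) v)"
      by (rule ext) (simp only: fd_fun[OF d])
    then show ?thesis using SPa.IH by (simp only:) (rule SP.SPa; blast)
  qed
  then show ?case using d differentiable_def by blast
qed

lemma SP_smooth: "SP h \<Longrightarrow> smooth_map h"
  by (rule smooth_coind[of SP]) (use SP_step in blast)+

lemma smooth_SP: "smooth_map f \<Longrightarrow> SP f"
  using SP.SPm[OF smooth_const[of 1]] by fastforce

lemma smooth_add: "smooth_map f \<Longrightarrow> smooth_map g \<Longrightarrow> smooth_map (\<lambda>x. f x + g x)"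
  by (rule SP_smooth, rule SP.SPa) (rule smooth_SP, assumption)+

lemma smooth_mult: "smooth_map a \<Longrightarrow> smooth_map f \<Longrightarrow> smooth_map (\<lambda>x. a x *\<^sub>R f x)"
  by (rule SP_smooth, rule SP.SPm)

lemma smooth_scale: "smooth_map f \<Longrightarrow> smooth_map (\<lambda>x. c *\<^sub>R f x)"
  by (rule smooth_mult[OF smooth_const])

lemma smooth_diff: "smooth_map f \<Longrightarrow> smooth_map g \<Longrightarrow> smooth_map (\<lambda>x. f x - g x)"
  using smooth_add[of f "\<lambda>x. (-1) *\<^sub>R g x"] smooth_scale[of g "-1"] by simp

lemma smooth_sum: "finite A \<Longrightarrow> (\<And>b. b \<in> A \<Longrightarrow> smooth_map (f b)) \<Longrightarrow> smooth_map (\<lambda>x. \<Sum>b\<in>A. f b x)"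
proof (induction A rule: finite_induct)
  case empty
  then show ?case using smooth_const[of 0] by simp
next
  case (insert a A)
  then show ?case using smooth_add[of "f a" "\<lambda>x. \<Sum>b\<in>A. f b x"] by simp
qed

lemma smooth_linear:
  assumes "smooth_map f" "bounded_linear L"
  shows "smooth_map (\<lambda>x. L (f x))"
proof -
  show ?thesis
  proof (rule smooth_coind[of "\<lambda>g. \<exists>f. smooth_map f \<and> g = (\<lambda>x. L (f x))"])
    show "\<exists>fa. smooth_map fa \<and> (\<lambda>x. L (f x)) = (\<lambda>x. L (fa x))" using assms by blast
  next
    fix g
    assume "\<exists>f. smooth_map f \<and> g = (\<lambda>x. L (f x))"
    then obtain f where f: "smooth_map f" "g = (\<lambda>x. L (f x))" by blast
    have d: "(g has_derivative (\<lambda>v. L (frechet_derivative f (at x) v))) (at x)" for x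
      unfolding f(2) using bounded_linear.has_derivative[OF assms(2) smooth_hasderiv[OF f(1)]] .
    have "(\<lambda>x. frechet_derivative g (at x) v) = (\<lambda>x. L (frechet_derivative f (at x) v))" for v
      by (rule ext) (simp only: fd_fun[OF d])
    then show "(\<forall>x. g differentiable (at x)) \<and> (\<forall>v. (\<exists>f. smooth_map f \<and> (\<lambda>x. frechet_derivative g (at x) v) = (\<lambda>x. L (f x))) \<or> smooth_map (\<lambda>x. frechet_derivative g (at x) v))"
      using d differentiable_def smooth_deriv[OF f(1)] by blast
  qed
qed

lemma bracket_expand:
  fixes U W :: "'a::euclidean_space \<Rightarrow> 'a"
  assumes "smooth_map U" "smooth_map W"
  shows "lie_bracket U W = (\<lambda>x. (\<Sum>b\<in>Basis. (U x \<bullet> b) *\<^sub>R frechet_derivative W (at x) b)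
     - (\<Sum>b\<in>Basis. (W x \<bullet> b) *\<^sub>R frechet_derivative U (at x) b))"
proof (rule ext)
  fix x
  have lW: "linear (frechet_derivative W (at x))" and lU: "linear (frechet_derivative U (at x))"
    using smooth_hasderiv assms has_derivative_linear by blast+
  have e1: "frechet_derivative W (at x) (U x) = (\<Sum>b\<in>Basis. (U x \<bullet> b) *\<^sub>R frechet_derivative W (at x) b)"
    by (subst euclidean_representation[symmetric, of "U x"]) (simp add: linear_sum[OF lW] linear_scale[OF lW])
  have e2: "frechet_derivative U (at x) (W x) = (\<Sum>b\<in>Basis. (W x \<bullet> b) *\<^sub>R frechet_derivative U (at x) b)"
    by (subst euclidean_representation[symmetric, of "W x"]) (simp add: linear_sum[OF lU] linear_scale[OF lU])
  show "lie_bracket U W x = (\<Sum>b\<in>Basis. (U x \<bullet> b) *\<^sub>R frechet_derivative W (at x) b)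
     - (\<Sum>b\<in>Basis. (W x \<bullet> b) *\<^sub>R frechet_derivative U (at x) b)" unfolding lie_bracket_def e1 e2 ..
qed

lemma smooth_bracket:
  fixes U W :: "'a::euclidean_space \<Rightarrow> 'a"
  assumes "smooth_map U" "smooth_map W"
  shows "smooth_map (lie_bracket U W)"
  unfolding bracket_expand[OF assms]
  by (intro smooth_diff smooth_sum finite_Basis smooth_mult smooth_deriv assms
        smooth_linear[OF _ bounded_linear_inner_left])

lemma axis_sum: "(\<chi> i. g i) = (\<Sum>i\<in>UNIV. axis i (g i) :: 'a::real_normed_vector ^ 'n)"
  by (simp add: vec_eq_iff axis_def)

lemma bl_axis: "bounded_linear (axis i :: 'a::euclidean_space \<Rightarrow> 'a ^ 'n)"
proof (rule bounded_linear_intro[of _ 1])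
  show "axis i (x + y) = axis i x + axis i y" for x y :: 'a by (simp add: axis_def vec_eq_iff)
  show "axis i (r *\<^sub>R x) = r *\<^sub>R axis i x" for r and x :: 'a by (simp add: axis_def vec_eq_iff)
  show "norm (axis i x :: 'a ^ 'n) \<le> norm x * 1" for x :: 'a
    by (simp add: norm_eq_sqrt_inner inner_axis_axis)
qed

lemma ds_deriv:
  fixes U :: "'a::euclidean_space \<Rightarrow> 'a"
  assumes "smooth_map U"
  shows "((direct_sum_vf U :: 'a ^ 'n \<Rightarrow> 'a ^ 'n) has_derivative
    (\<lambda>H. \<chi> i. frechet_derivative U (at (X $ i)) (H $ i))) (at X)"
proof -
  have c: "((\<lambda>Y::'a^'n. U (Y $ i)) has_derivative (\<lambda>H. frechet_derivative U (at (X $ i)) (H $ i))) (at X)" for i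
    using diff_chain_at[OF bounded_linear_imp_has_derivative[OF bounded_linear_vec_nth[of i]]
        smooth_hasderiv[OF assms, of "X $ i"]] by (simp add: o_def)
  have "((\<lambda>Y::'a^'n. \<Sum>i\<in>UNIV. axis i (U (Y $ i))) has_derivative
      (\<lambda>H. \<Sum>i\<in>UNIV. axis i (frechet_derivative U (at (X $ i)) (H $ i)))) (at X)"
    by (intro has_derivative_sum bounded_linear.has_derivative[OF bl_axis] c)
  then show ?thesis unfolding direct_sum_vf_def axis_sum[symmetric] .
qed

lemma ds_bracket:
  fixes U W :: "'a::euclidean_space \<Rightarrow> 'a"
  assumes "smooth_map U" "smooth_map W"
  shows "lie_bracket (direct_sum_vf U :: 'a ^ 'n \<Rightarrow> 'a ^ 'n) (direct_sum_vf W) = direct_sum_vf (lie_bracket U W)"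
proof (rule ext)
  fix X :: "'a ^ 'n"
  have fU: "frechet_derivative (direct_sum_vf U :: 'a ^ 'n \<Rightarrow> 'a ^ 'n) (at X) = (\<lambda>H. \<chi> i. frechet_derivative U (at (X $ i)) (H $ i))"
    by (rule fd_fun[OF ds_deriv[OF assms(1)]])
  have fW: "frechet_derivative (direct_sum_vf W :: 'a ^ 'n \<Rightarrow> 'a ^ 'n) (at X) = (\<lambda>H. \<chi> i. frechet_derivative W (at (X $ i)) (H $ i))"
    by (rule fd_fun[OF ds_deriv[OF assms(2)]])
  show "lie_bracket (direct_sum_vf U :: 'a ^ 'n \<Rightarrow> 'a ^ 'n) (direct_sum_vf W) X = direct_sum_vf (lie_bracket U W) X"
    unfolding lie_bracket_def fU fW by (simp add: direct_sum_vf_def vec_eq_iff)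
qed

lemma lie_ds:
  fixes S :: "('a::euclidean_space \<Rightarrow> 'a) set"
  assumes "W \<in> lie_gen S" "\<forall>U\<in>S. smooth_map U"
  shows "smooth_map W \<and> (direct_sum_vf W :: 'a ^ 'n \<Rightarrow> 'a ^ 'n) \<in> lie_gen (direct_sum_vf ` S)"
  using assms(1)
proof induction
  case (base U)
  then show ?case using assms(2) by (auto intro: lie_gen.base)
next
  case zero
  have "(direct_sum_vf (\<lambda>x::'a. 0) :: 'a ^ 'n \<Rightarrow> 'a ^ 'n) = (\<lambda>x. 0)"
    by (simp add: direct_sum_vf_def vec_eq_iff fun_eq_iff)
  then show ?case by (simp add: smooth_const lie_gen.zero)
next
  case (add U W)
  have "(direct_sum_vf (\<lambda>x. U x + W x) :: 'a ^ 'n \<Rightarrow> 'a ^ 'n) = (\<lambda>x. direct_sum_vf U x + direct_sum_vf W x)"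
    by (simp add: direct_sum_vf_def vec_eq_iff fun_eq_iff)
  then show ?case using add.IH by (simp add: smooth_add lie_gen.add)
next
  case (scale U c)
  have "(direct_sum_vf (\<lambda>x. c *\<^sub>R U x) :: 'a ^ 'n \<Rightarrow> 'a ^ 'n) = (\<lambda>x. c *\<^sub>R direct_sum_vf U x)"
    by (simp add: direct_sum_vf_def vec_eq_iff fun_eq_iff)
  then show ?case using scale.IH by (simp add: smooth_scale lie_gen.scale)
next
  case (bracket U W)
  from bracket.IH have h: "smooth_map U" "smooth_map W"
    "(direct_sum_vf U :: 'a ^ 'n \<Rightarrow> 'a ^ 'n) \<in> lie_gen (direct_sum_vf ` S)"
    "(direct_sum_vf W :: 'a ^ 'n \<Rightarrow> 'a ^ 'n) \<in> lie_gen (direct_sum_vf ` S)" by auto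
  have "(direct_sum_vf (lie_bracket U W) :: 'a ^ 'n \<Rightarrow> 'a ^ 'n) = lie_bracket (direct_sum_vf U) (direct_sum_vf W)"
    by (rule ds_bracket[OF h(1,2), symmetric])
  then show ?case using smooth_bracket[OF h(1,2)] lie_gen.bracket[OF h(3,4)] by simp
qed

theorem lemma1:
  fixes \<Omega> :: "(real ^ 'm) set"
    and x :: "(real ^ 'm) ^ 'n"
    and d :: nat
    and V :: "nat \<Rightarrow> (real ^ 'm \<Rightarrow> real ^ 'm)"
  assumes "CARD('m) \<ge> 2"
    and "bounded \<Omega>" and "open \<Omega>" and "connected \<Omega>"
    and "\<forall>i. x $ i \<in> \<Omega>"
    and "\<forall>i j. i \<noteq> j \<longrightarrow> x $ i \<noteq> x $ j"
    and "\<forall>k<d. smooth_map (V k)"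
    and "interpolates (lie_gen (V ` {..<d})) (\<lambda>i. x $ i)"
  shows "lie_at ((\<lambda>k. direct_sum_vf (V k) :: (real ^ 'm) ^ 'n \<Rightarrow> (real ^ 'm) ^ 'n) ` {..<d}) x = UNIV"
proof -
  have img: "(\<lambda>k. direct_sum_vf (V k) :: (real ^ 'm) ^ 'n \<Rightarrow> (real ^ 'm) ^ 'n) ` {..<d} = direct_sum_vf ` (V ` {..<d})"
    by (simp add: image_image)
  have sm: "\<forall>U\<in>V ` {..<d}. smooth_map U" using assms(7) by auto
  have "v \<in> lie_at ((\<lambda>k. direct_sum_vf (V k) :: (real ^ 'm) ^ 'n \<Rightarrow> (real ^ 'm) ^ 'n) ` {..<d}) x" for v
  proof -
    obtain W where W: "W \<in> lie_gen (V ` {..<d})" "\<forall>i. W (x $ i) = v $ i"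
      using assms(8) unfolding interpolates_def by blast
    have "(direct_sum_vf W :: (real ^ 'm) ^ 'n \<Rightarrow> (real ^ 'm) ^ 'n) \<in> lie_gen (direct_sum_vf ` (V ` {..<d}))"
      using lie_ds[OF W(1) sm] by blast
    moreover have "(direct_sum_vf W :: (real ^ 'm) ^ 'n \<Rightarrow> (real ^ 'm) ^ 'n) x = v"
      using W(2) by (simp add: direct_sum_vf_def vec_eq_iff)
    ultimately show ?thesis unfolding lie_at_def img by blast
  qed
  then show ?thesis by blast
qed

end
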